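(* $(\mathcal D,\sqsubseteq)$ is a complete lattice.
   Context: Let $\mathcal V$ be a countably infinite set of variables. $\mathcal M$ is the set of maps $m:\mathcal V\to\mathbb N\cup\{\infty\}$, ordered pointwise ($m_1\sqsubseteq m_2$ iff $m_1(x)\le m_2(x)$ for all $x$). $\mathcal P$ is the set of discrete probability distributions on $\mathcal M$. For a subdistribution $\pi$ on $\mathcal M$ with total mass $|\pi|$, its weighting $\overline\pi:\mathcal V\to\mathbb R_{\ge0}\cup\{\infty\}$ is $\overline\pi(x)=\frac1{|\pi|}\sum_m\pi(m)m(x)$ if $|\pi|>0$, and $\overline\pi(x)=0$ otherwise. For $p_1,p_2\in\mathcal P$: $p_1\sqsubseteq p_2$ iff there is a coupling $\omega$ of $p_1,p_2$ (distribution on $\mathcal M\times\mathcal M$ with marginals $p_1$ and $p_2$) such that for all $m\in\mathcal M$, $\overline{\omega(\cdot,m)}(x)\le m(x)$ for all $x$, where $\omega(\cdot,m)$ is the subdistribution $m'\mapsto\omega(m',m)$. For $P\subseteq\mathcal P$, $\downarrow P=\{p\in\mathcal P\mid p\sqsubseteq p'\text{ for some }p'\in P\}$. $\mathcal D=\{P\subseteq\mathcal P\mid P\ne\emptyset,\ \downarrow P=P\}$, ordered by $P_1\sqsubseteq P_2$ iff for every $p_1\in P_1$ there is $p_2\in P_2$ with $p_1\sqsubseteq p_2$. *)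

theory Defs
  imports "HOL-Probability.Probability" "HOL-Algebra.Complete_Lattice"
begin

type_synonym 'v mem = "'v \<Rightarrow> enat"

definition mass :: "('a \<Rightarrow> real) \<Rightarrow> ennreal" where
  "mass \<pi> = (\<integral>\<^sup>+ m. ennreal (\<pi> m) \<partial>count_space UNIV)"

definition weighting :: "('v mem \<Rightarrow> real) \<Rightarrow> 'v \<Rightarrow> ennreal" where
  "weighting \<pi> x =
     (if mass \<pi> > 0
      then (\<integral>\<^sup>+ m. ennreal (\<pi> m) * ennreal_of_enat (m x) \<partial>count_space UNIV) / mass \<pi>
      else 0)"

definition is_coupling :: "('a \<times> 'b) pmf \<Rightarrow> 'a pmf \<Rightarrow> 'b pmf \<Rightarrow> bool" where
  "is_coupling \<omega> p1 p2 \<longleftrightarrow> map_pmf fst \<omega> = p1 \<and> map_pmf snd \<omega> = p2"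

definition le_dist :: "'v mem pmf \<Rightarrow> 'v mem pmf \<Rightarrow> bool" where
  "le_dist p1 p2 \<longleftrightarrow>
     (\<exists>\<omega>. is_coupling \<omega> p1 p2 \<and>
        (\<forall>m x. weighting (\<lambda>m'. pmf \<omega> (m', m)) x \<le> ennreal_of_enat (m x)))"

definition down_closure :: "'v mem pmf set \<Rightarrow> 'v mem pmf set" where
  "down_closure P = {p. \<exists>p'\<in>P. le_dist p p'}"

definition Dom :: "'v mem pmf set set" where
  "Dom = {P. P \<noteq> {} \<and> down_closure P = P}"

definition le_Dom :: "'v mem pmf set \<Rightarrow> 'v mem pmf set \<Rightarrow> bool" where
  "le_Dom P1 P2 \<longleftrightarrow> (\<forall>p1\<in>P1. \<exists>p2\<in>P2. le_dist p1 p2)"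

definition D_order :: "'v mem pmf set gorder" where
  "D_order = \<lparr>carrier = Dom, eq = (=), le = le_Dom\<rparr>"

end

theory Submission
  imports Defs
begin

lemma nn_single: "(\<integral>\<^sup>+ m. (if m = a then c else 0) \<partial>count_space UNIV) = (c::ennreal)"
proof -
  have "(\<lambda>m. if m = a then c else 0) = (\<lambda>m. c * indicator {a} m)"
    by (auto simp: indicator_def fun_eq_iff)
  then show ?thesis by (simp add: nn_integral_cmult_indicator)
qed

lemma weighting_single:
  assumes "c \<ge> 0"
  shows "weighting (\<lambda>m'. if m' = a then c else 0) x = (if c > 0 then ennreal_of_enat (a x) else 0)"
proof -
  have m: "mass (\<lambda>m'. if m' = a then c else 0) = ennreal c"
    unfolding mass_def
    by (subst nn_single[symmetric]) (rule nn_integral_cong, auto)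
  have i: "(\<integral>\<^sup>+ m. ennreal (if m = a then c else 0) * ennreal_of_enat (m x) \<partial>count_space UNIV)
      = ennreal c * ennreal_of_enat (a x)"
    by (subst nn_single[symmetric]) (rule nn_integral_cong, auto)
  show ?thesis
  proof (cases "c > 0")
    case True
    have "ennreal c * ennreal_of_enat (a x) / ennreal c = ennreal_of_enat (a x)"
      using True by (metis ennreal_eq_0_iff ennreal_neq_top linorder_not_le
            mult.commute ennreal_mult_divide_eq)
    then show ?thesis using True unfolding weighting_def m i by simp
  next
    case False
    then show ?thesis unfolding weighting_def m by simp
  qed
qed

lemma le_dist_refl: "le_dist p p"
proof -
  define \<omega> where "\<omega> = map_pmf (\<lambda>m. (m, m)) p"
  have c: "is_coupling \<omega> p p"
    unfolding is_coupling_def \<omega>_def by (simp add: pmf.map_comp o_def)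
  have pm: "pmf \<omega> (m', m) = (if m' = m then pmf p m else 0)" for m' m
  proof -
    have "(\<lambda>m. (m, m)) -` {(m', m)} = (if m' = m then {m} else {})" by auto
    then show ?thesis unfolding \<omega>_def pmf_map by (auto simp: measure_pmf_single)
  qed
  have "weighting (\<lambda>m'. pmf \<omega> (m', m)) x \<le> ennreal_of_enat (m x)" for m x
  proof -
    have "(\<lambda>m'. pmf \<omega> (m', m)) = (\<lambda>m'. if m' = m then pmf p m else 0)"
      using pm by auto
    then show ?thesis by (simp add: weighting_single)
  qed
  then show ?thesis unfolding le_dist_def using c by blast
qed

lemma le_dist_bot: "le_dist (return_pmf (\<lambda>_. 0)) p"
proof -
  define z :: "'a mem" where "z = (\<lambda>_. 0)"
  define \<omega> where "\<omega> = map_pmf (\<lambda>m. (z, m)) p"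
  have c: "is_coupling \<omega> (return_pmf z) p"
    unfolding is_coupling_def \<omega>_def by (simp add: pmf.map_comp o_def map_pmf_const)
  have pm: "pmf \<omega> (m', m) = (if m' = z then pmf p m else 0)" for m' m
  proof -
    have "(\<lambda>m. (z, m)) -` {(m', m)} = (if m' = z then {m} else {})" by auto
    then show ?thesis unfolding \<omega>_def pmf_map by (auto simp: measure_pmf_single)
  qed
  have "weighting (\<lambda>m'. pmf \<omega> (m', m)) x \<le> ennreal_of_enat (m x)" for m x
  proof -
    have "(\<lambda>m'. pmf \<omega> (m', m)) = (\<lambda>m'. if m' = z then pmf p m else 0)"
      using pm by auto
    then show ?thesis by (simp add: weighting_single z_def)
  qed
  then show ?thesis unfolding le_dist_def z_def[symmetric] using c by blast
qed

lemma Dom_closed: "P \<in> Dom \<Longrightarrow> p' \<in> P \<Longrightarrow> le_dist p p' \<Longrightarrow> p \<in> P"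
  unfolding Dom_def down_closure_def by blast

lemma le_Dom_iff: "P1 \<in> Dom \<Longrightarrow> P2 \<in> Dom \<Longrightarrow> le_Dom P1 P2 \<longleftrightarrow> P1 \<subseteq> P2"
  unfolding le_Dom_def using Dom_closed le_dist_refl by blast

lemma bot_in: "P \<in> Dom \<Longrightarrow> return_pmf (\<lambda>_. 0) \<in> P"
  using Dom_closed le_dist_bot unfolding Dom_def by blast

lemma DomI: "P \<noteq> {} \<Longrightarrow> (\<And>p p'. p' \<in> P \<Longrightarrow> le_dist p p' \<Longrightarrow> p \<in> P) \<Longrightarrow> P \<in> Dom"
  unfolding Dom_def down_closure_def using le_dist_refl by blast

lemma po: "partial_order (D_order :: 'v mem pmf set gorder)"
  apply unfold_locales
  apply (auto simp: D_order_def le_Dom_iff)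
  done

theorem proposition4:
  assumes "countable (UNIV :: 'v set)" and "infinite (UNIV :: 'v set)"
  shows "complete_lattice (D_order :: 'v mem pmf set gorder)"
proof (rule partial_order.complete_lattice_criterion1[OF po])
  have "UNIV \<in> (Dom :: 'v mem pmf set set)" by (rule DomI) auto
  then show "\<exists>g. greatest (D_order :: 'v mem pmf set gorder) g (carrier D_order)"
    unfolding greatest_def by (auto simp: D_order_def le_Dom_def intro!: exI[of _ UNIV] le_dist_refl)
next
  fix A :: "'v mem pmf set set"
  assume A: "A \<subseteq> carrier D_order" "A \<noteq> {}"
  then have AD: "A \<subseteq> Dom" by (simp add: D_order_def)
  have I: "\<Inter>A \<in> Dom"
    apply (rule DomI)
    using AD bot_in apply blast
    using AD Dom_closed by blast
  show "\<exists>i. greatest D_order i (Lower D_order A)"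
    apply (rule exI[of _ "\<Inter>A"])
    using I AD unfolding greatest_def Lower_def
    by (auto simp: D_order_def le_Dom_iff) (meson AD in_mono)
qed

end
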